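(* Let $n\ge1$, $t\in\mathbb{C}^{N_n}\setminus\{0\}$, and write $f_t=\sum_{k=0}^{n-1}x_k^{s_k}+\sum_jT_j(x_n)x_0^{j_0}\cdots x_{n-1}^{j_{n-1}}$ as in the context. For every $c\in\mathbb{C}$, with $\ell=x_n-c$, one has $\min_{j:\,T_j\not\equiv0}\overline{\mathrm{val}}_\ell(T_j)\le1$; and equality holds (for some $c$) if and only if the point $[t]\in\mathcal{E}_n$ lies in the boundary $\partial\mathcal{E}_n$.
   Context: Sylvester numbers: $s_0=2$, $s_{k+1}=1+\prod_{i=0}^ks_i$. For $m\ge0$: $d_m=\prod_{k=0}^ms_k$, $d_{m,k}=d_m/s_k$, $w^{(m)}(i)=d_m-\sum_{k=0}^mi_kd_{m,k}$; $I_m$ = tuples $(i_0,\dots,i_m)$ with $0\le i_k\le s_k-2$ and $w^{(m)}(i)>0$, $N_m=|I_m|$. For $t\in\mathbb{C}^{N_m}$: $F_t=\sum_{k=0}^mx_k^{s_k}+\sum_{i\in I_m}t_ix^ix_{m+1}^{w^{(m)}(i)}$ in the weighted polynomial ring with weights $d_{m,0},\dots,d_{m,m},1$, and $f_t=F_t|_{x_{m+1}=1}$. $\mathcal{E}_m=[(\mathbb{C}^{N_m}\setminus0)/\mathbb{C}^*]$ with $\lambda\cdot t=(\lambda^{w^{(m)}(i)}t_i)$. Boundary: for $t'\in\mathbb{C}^{N_{n-1}}\setminus0$ put $\ell'=x_n-\frac1{s_n}t'_{(0,\dots,0)}x_{n+1}^{d_{n-1}}$; then $\sum_{k<n}x_k^{s_k}+\sum_{j\in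 I_{n-1}}t'_jx_0^{j_0}\cdots x_{n-1}^{j_{n-1}}\ell'^{\,w^{(n-1)}(j)}x_{n+1}^{w^{(n-1)}(j)}+\ell'^{\,s_n}=F_t$ for a unique $t\in\mathbb{C}^{N_n}$, and $\partial\mathcal{E}_n$ is the image of the induced map $\mathcal{E}_{n-1}\to\mathcal{E}_n$. Decomposition: collecting powers of $x_n$, $f_t=\sum_{k<n}x_k^{s_k}+\sum_jT_j(x_n)x_0^{j_0}\cdots x_{n-1}^{j_{n-1}}$ with $j=(j_0,\dots,j_{n-1})$, $0\le j_k\le s_k-2$, $T_j\in\mathbb{C}[x_n]$. For $\ell=x_n-c$: $\mathrm{val}_\ell(T_j)$ = largest power of $\ell$ dividing $T_j$, and $\overline{\mathrm{val}}_\ell(T_j)=\mathrm{val}_\ell(T_j)/w^{(n-1)}(j)$. *)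

theory Defs
  imports Complex_Main "HOL-Library.Poly_Mapping" "HOL-Computational_Algebra.Polynomial"
begin

fun sylv :: "nat \<Rightarrow> nat" where
  "sylv 0 = 2"
| "sylv (Suc k) = 1 + (\<Prod>i\<le>k. sylv i)"

definition dd :: "nat \<Rightarrow> nat" where
  "dd m = (\<Prod>k\<le>m. sylv k)"

definition ddk :: "nat \<Rightarrow> nat \<Rightarrow> nat" where
  "ddk m k = dd m div sylv k"

text \<open>Tuples (i_0,...,i_m) are represented as lists of length m+1.\<close>
definition wt :: "nat \<Rightarrow> nat list \<Rightarrow> int" where
  "wt m i = int (dd m) - (\<Sum>k\<le>m. int (i ! k) * int (ddk m k))"

definition Iset :: "nat \<Rightarrow> nat list set" where
  "Iset m = {i. length i = m + 1 \<and> (\<forall>k\<le>m. i ! k \<le> sylv k - 2) \<and> wt m i > 0}"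

text \<open>A point t of C^{N_m} is a function on tuples, vanishing off I_m.\<close>
definition param :: "nat \<Rightarrow> (nat list \<Rightarrow> complex) \<Rightarrow> bool" where
  "param m t \<longleftrightarrow> (\<forall>i. i \<notin> Iset m \<longrightarrow> t i = 0)"

definition nonzero_param :: "nat \<Rightarrow> (nat list \<Rightarrow> complex) \<Rightarrow> bool" where
  "nonzero_param m t \<longleftrightarrow> param m t \<and> (\<exists>i\<in>Iset m. t i \<noteq> 0)"

definition scale :: "nat \<Rightarrow> complex \<Rightarrow> (nat list \<Rightarrow> complex) \<Rightarrow> (nat list \<Rightarrow> complex)" where
  "scale m a t = (\<lambda>i. a ^ nat (wt m i) * t i)"

type_synonym mpoly = "(nat \<Rightarrow>\<^sub>0 nat) \<Rightarrow>\<^sub>0 complex"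

definition Var :: "nat \<Rightarrow> mpoly" where
  "Var k = Poly_Mapping.single (Poly_Mapping.single k 1) 1"

definition Const :: "complex \<Rightarrow> mpoly" where
  "Const c = Poly_Mapping.single 0 c"

definition FF :: "nat \<Rightarrow> (nat list \<Rightarrow> complex) \<Rightarrow> mpoly" where
  "FF m t = (\<Sum>k\<le>m. Var k ^ sylv k)
     + (\<Sum>i\<in>Iset m. Const (t i) * (\<Prod>k\<le>m. Var k ^ (i ! k)) * Var (Suc m) ^ nat (wt m i))"

definition ff :: "nat \<Rightarrow> (nat list \<Rightarrow> complex) \<Rightarrow> mpoly" where
  "ff m t = (\<Sum>k\<le>m. Var k ^ sylv k)
     + (\<Sum>i\<in>Iset m. Const (t i) * (\<Prod>k\<le>m. Var k ^ (i ! k)))"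

text \<open>The identity defining the map E_{n-1} -> E_n, t' |-> t (here called u).\<close>
definition bdry_identity :: "nat \<Rightarrow> (nat list \<Rightarrow> complex) \<Rightarrow> (nat list \<Rightarrow> complex) \<Rightarrow> bool" where
  "bdry_identity n t' u \<longleftrightarrow>
    (let lin = Var n - Const (t' (replicate n 0) / of_nat (sylv n)) * Var (Suc n) ^ dd (n - 1) in
      (\<Sum>k<n. Var k ^ sylv k)
      + (\<Sum>j\<in>Iset (n - 1). Const (t' j) * (\<Prod>k<n. Var k ^ (j ! k))
            * lin ^ nat (wt (n - 1) j) * Var (Suc n) ^ nat (wt (n - 1) j))
      + lin ^ sylv n
      = FF n u)"

text \<open>[t] lies in the image of E_{n-1} -> E_n.\<close>
definition in_boundary :: "nat \<Rightarrow> (nat list \<Rightarrow> complex) \<Rightarrow> bool" where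
  "in_boundary n t \<longleftrightarrow>
    (\<exists>t' u a. nonzero_param (n - 1) t' \<and> param n u \<and> bdry_identity n t' u
              \<and> a \<noteq> 0 \<and> t = scale n a u)"

definition Jset :: "nat \<Rightarrow> nat list set" where
  "Jset n = {j. length j = n \<and> (\<forall>k<n. j ! k \<le> sylv k - 2)}"

definition expo :: "nat \<Rightarrow> nat list \<Rightarrow> nat \<Rightarrow> (nat \<Rightarrow>\<^sub>0 nat)" where
  "expo n j a = (\<Sum>k<n. Poly_Mapping.single k (j ! k)) + Poly_Mapping.single n a"

text \<open>T_j(x_n): collect the coefficients of x^j x_n^a in f_t (x_n-degree of f_t is at most s_n).\<close>
definition TT :: "nat \<Rightarrow> (nat list \<Rightarrow> complex) \<Rightarrow> nat list \<Rightarrow> complex poly" where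
  "TT n t j = Poly (map (\<lambda>a. Poly_Mapping.lookup (ff n t) (expo n j a)) [0..<sylv n + 1])"

text \<open>val_ell(T_j) with ell = x_n - c is the root multiplicity of c; normalized valuation.\<close>
definition valbar :: "nat \<Rightarrow> (nat list \<Rightarrow> complex) \<Rightarrow> complex \<Rightarrow> nat list \<Rightarrow> real" where
  "valbar n t c j = real (order c (TT n t j)) / real_of_int (wt (n - 1) j)"

definition minvalbar :: "nat \<Rightarrow> (nat list \<Rightarrow> complex) \<Rightarrow> complex \<Rightarrow> real" where
  "minvalbar n t c = Min {valbar n t c j | j. j \<in> Jset n \<and> TT n t j \<noteq> 0}"

end

theory Submission
  imports Defs
begin

lemma sylv_ge2: "sylv k \<ge> 2"
proof (induction k rule: less_induct)
  case (less k)
  show ?case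
  proof (cases k)
    case 0 then show ?thesis by simp
  next
    case (Suc m)
    have "(\<Prod>i\<le>m. sylv i) \<ge> 1"
    proof (intro prod_ge_1)
      fix x assume "x \<in> {..m}"
      then have "2 \<le> sylv x" using less Suc by simp
      then show "1 \<le> sylv x" by simp
    qed
    then show ?thesis using Suc by simp
  qed
qed

lemma sylv_pos: "sylv k > 0" using sylv_ge2[of k] by simp

lemma dd_pos: "dd m > 0"
  unfolding dd_def using sylv_pos by (simp add: prod_pos)

lemma sylv_Suc_dd: "sylv (Suc m) = dd m + 1"
  by (simp add: dd_def)

declare sylv.simps(2)[simp del]

lemma dd_Suc: "dd (Suc m) = dd m * sylv (Suc m)"
  by (simp add: dd_def atMost_Suc)

lemma sylv_dvd_dd: "k \<le> m \<Longrightarrow> sylv k dvd dd m"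
  unfolding dd_def by (rule dvd_prodI) auto

lemma ddk_pos: "k \<le> m \<Longrightarrow> ddk m k > 0"
  unfolding ddk_def using sylv_dvd_dd[of k m] dd_pos[of m] sylv_pos[of k]
  by (metis dvd_div_mult_self gr0I mult_is_0 neq0_conv)

lemma ddk_Suc: "k \<le> m \<Longrightarrow> ddk (Suc m) k = ddk m k * sylv (Suc m)"
  unfolding ddk_def dd_Suc using sylv_dvd_dd[of k m]
  by (metis div_mult_swap mult.commute)

lemma ddk_Suc_self: "ddk (Suc m) (Suc m) = dd m"
  unfolding ddk_def dd_Suc using sylv_pos[of "Suc m"] by (simp del: sylv.simps)

lemma wt_le_dd: "wt m i \<le> int (dd m)"
  unfolding wt_def by (simp add: sum_nonneg)

lemma wt_append:
  assumes "length j = Suc m"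
  shows "wt (Suc m) (j @ [a]) = int (sylv (Suc m)) * wt m j - int a * int (dd m)"
proof -
  have "(\<Sum>k\<le>m. int ((j @ [a]) ! k) * int (ddk (Suc m) k))
      = (\<Sum>k\<le>m. int (j ! k) * int (ddk m k) * int (sylv (Suc m)))"
    using assms by (intro sum.cong) (auto simp: nth_append ddk_Suc)
  then have "(\<Sum>k\<le>Suc m. int ((j @ [a]) ! k) * int (ddk (Suc m) k))
      = (\<Sum>k\<le>m. int (j ! k) * int (ddk m k)) * int (sylv (Suc m)) + int a * int (dd m)"
    using assms by (simp add: ddk_Suc_self sum_distrib_right nth_append)
  then show ?thesis unfolding wt_def by (simp add: dd_Suc algebra_simps)
qed

lemma wt_zeros: "wt m (replicate (Suc m) 0) = int (dd m)"
proof -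
  have "\<And>k. k \<le> m \<Longrightarrow> replicate (Suc m) 0 ! k = (0::nat)" by (simp del: replicate_Suc)
  then show ?thesis unfolding wt_def by simp
qed

lemma wt_nonzero:
  assumes "length j = Suc m" "j \<noteq> replicate (Suc m) 0"
  shows "wt m j \<le> int (dd m) - 1"
proof -
  obtain k where k: "k < Suc m" "j ! k \<noteq> 0"
    using assms by (metis in_set_conv_nth replicate_eqI)
  have "1 \<le> int (j ! k)" using k by simp
  then have "1 * int (ddk m k) \<le> int (j ! k) * int (ddk m k)"
    by (intro mult_right_mono) auto
  also have "\<dots> \<le> (\<Sum>k\<le>m. int (j ! k) * int (ddk m k))"
    using k by (intro member_le_sum) auto
  finally show ?thesis using ddk_pos[of k m] k unfolding wt_def by simp
qed

lemma append_Iset_le: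
  assumes "length j = Suc m" "j @ [a] \<in> Iset (Suc m)"
  shows "int a \<le> wt m j"
proof -
  have w: "int (sylv (Suc m)) * wt m j - int a * int (dd m) > 0"
    using assms wt_append[of j m a] unfolding Iset_def by simp
  have le: "wt m j \<le> int (dd m)" by (rule wt_le_dd)
  have "int a * int (dd m) < (int (dd m) + 1) * wt m j"
    using w by (simp add: sylv_Suc_dd add.commute)
  also have "\<dots> = int (dd m) * wt m j + wt m j" by (simp add: algebra_simps)
  also have "\<dots> \<le> int (dd m) * wt m j + int (dd m)" using le by simp
  finally have "(int a - wt m j - 1) * int (dd m) < 0" by (simp add: algebra_simps)
  then have "int a - wt m j - 1 < 0" using dd_pos[of m]
    by (simp add: mult_less_0_iff)
  then show ?thesis by simp
qed

abbreviation lk :: "('a \<Rightarrow>\<^sub>0 'b::zero) \<Rightarrow> 'a \<Rightarrow> 'b" where "lk \<equiv> Poly_Mapping.lookup"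

lemma Var_power: "Var k ^ e = Poly_Mapping.single (Poly_Mapping.single k e) 1"
  unfolding Var_def
  by (induction e) (simp_all add: mult_single single_add[symmetric] add.commute)

lemma prod_Var_power:
  assumes "finite A"
  shows "(\<Prod>k\<in>A. Var k ^ f k) = Poly_Mapping.single (\<Sum>k\<in>A. Poly_Mapping.single k (f k)) 1"
  using assms by (induction A rule: finite_induct) (simp_all add: Var_power mult_single)

lemma prod_single_one:
  assumes "finite A"
  shows "(\<Prod>k\<in>A. Poly_Mapping.single (g k) (1::complex)) = Poly_Mapping.single (\<Sum>k\<in>A. g k) 1"
  using assms by (induction A rule: finite_induct) (simp_all add: mult_single)

lemma Const_mult_single: "Const z * Poly_Mapping.single m 1 = Poly_Mapping.single m z"
  unfolding Const_def by (simp add: mult_single)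

lemma lookup_sum_single:
  assumes "finite A"
  shows "lk (\<Sum>k\<in>A. Poly_Mapping.single k (f k)) v = (if v \<in> A then f v else 0)"
  using assms by (simp add: lookup_sum lookup_single when_def)

lemma lookup_expo:
  "lk (expo n j a) v = (if v < n then j ! v else if v = n then a else 0)"
  unfolding expo_def by (simp add: lookup_add lookup_sum_single lookup_single when_def)

definition mon :: "nat \<Rightarrow> nat list \<Rightarrow> (nat \<Rightarrow>\<^sub>0 nat)" where
  "mon n i = (\<Sum>k\<le>n. Poly_Mapping.single k (i ! k))"

lemma lookup_mon: "lk (mon n i) v = (if v \<le> n then i ! v else 0)"
  unfolding mon_def by (simp add: lookup_sum_single)

lemma mon_eq_expo:
  assumes "length i = Suc n" "length j = n"
  shows "mon n i = expo n j a \<longleftrightarrow> i = j @ [a]"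
proof
  assume h: "mon n i = expo n j a"
  have "\<And>v. lk (mon n i) v = lk (expo n j a) v" using h by simp
  then have "\<And>v. v \<le> n \<Longrightarrow> i ! v = (if v < n then j ! v else a)"
    unfolding lookup_mon lookup_expo by (metis le_neq_implies_less)
  then show "i = j @ [a]" using assms
    by (intro nth_equalityI) (auto simp: nth_append less_Suc_eq_le)
next
  assume "i = j @ [a]"
  then show "mon n i = expo n j a" using assms
    by (intro poly_mapping_eqI) (auto simp: lookup_mon lookup_expo nth_append)
qed

lemma Iset_length: "i \<in> Iset n \<Longrightarrow> length i = Suc n"
  unfolding Iset_def by simp

lemma ff_alt: "ff n t = (\<Sum>k\<le>n. Poly_Mapping.single (Poly_Mapping.single k (sylv k)) 1)
     + (\<Sum>i\<in>Iset n. Poly_Mapping.single (mon n i) (t i))"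
  unfolding ff_def mon_def by (simp add: Var_power prod_single_one Const_mult_single)

lemma Jset_le: "j \<in> Jset n \<Longrightarrow> k < n \<Longrightarrow> j ! k \<le> sylv k - 2"
  unfolding Jset_def by simp

lemma single_eq_expo_iff:
  assumes "j \<in> Jset n" "k \<le> n"
  shows "Poly_Mapping.single k (sylv k) = expo n j a \<longleftrightarrow> k = n \<and> j = replicate n 0 \<and> a = sylv n"
proof
  assume h: "Poly_Mapping.single k (sylv k) = expo n j a"
  then have hv: "\<And>v. lk (Poly_Mapping.single k (sylv k)) v = lk (expo n j a) v" by simp
  have kn: "k = n"
  proof (rule ccontr)
    assume "k \<noteq> n"
    then have "k < n" using assms by simp
    then have "sylv k = j ! k" using hv[of k] by (simp add: lookup_expo)
    moreover have "j ! k \<le> sylv k - 2" using Jset_le[OF assms(1) \<open>k < n\<close>] .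
    ultimately show False using sylv_ge2[of k] by simp
  qed
  have "\<And>v. v < n \<Longrightarrow> j ! v = 0"
  proof -
    fix v assume "v < n"
    then show "j ! v = 0" using hv[of v] kn by (simp add: lookup_expo lookup_single when_def)
  qed
  moreover have "length j = n" using assms unfolding Jset_def by simp
  ultimately have "j = replicate n 0" by (simp add: list_eq_iff_nth_eq)
  moreover have "a = sylv n" using hv[of n] kn by (simp add: lookup_expo)
  ultimately show "k = n \<and> j = replicate n 0 \<and> a = sylv n" using kn by simp
next
  assume "k = n \<and> j = replicate n 0 \<and> a = sylv n"
  then show "Poly_Mapping.single k (sylv k) = expo n j a"
    by (intro poly_mapping_eqI) (auto simp: lookup_expo lookup_single when_def)
qed

lemma Jset_length: "j \<in> Jset n \<Longrightarrow> length j = n"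
  unfolding Jset_def by simp

lemma lookup_ff_expo:
  assumes "j \<in> Jset n"
  shows "lk (ff n t) (expo n j a) =
    (if j @ [a] \<in> Iset n then t (j @ [a]) else 0) + (if j = replicate n 0 \<and> a = sylv n then 1 else 0)"
proof -
  have fin: "finite (Iset n)"
  proof (rule finite_subset)
    show "Iset n \<subseteq> {i. set i \<subseteq> {..Max (sylv ` {..n})} \<and> length i = Suc n}"
    proof
      fix i assume i: "i \<in> Iset n"
      have "\<forall>x\<in>set i. x \<le> Max (sylv ` {..n})"
      proof
        fix x assume "x \<in> set i"
        then obtain k where k: "k < length i" "i ! k = x" by (auto simp: in_set_conv_nth)
        then have "k \<le> n" using Iset_length[OF i] by simp
        then have "x \<le> sylv k" using i k unfolding Iset_def by auto
        also have "\<dots> \<le> Max (sylv ` {..n})" using \<open>k \<le> n\<close> by (intro Max_ge) auto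
        finally show "x \<le> Max (sylv ` {..n})" .
      qed
      then show "i \<in> {i. set i \<subseteq> {..Max (sylv ` {..n})} \<and> length i = Suc n}"
        using Iset_length[OF i] by auto
    qed
  qed (rule finite_lists_length_eq, simp)
  have lj: "length j = n" using Jset_length[OF assms] .
  have A: "lk (\<Sum>k\<le>n. Poly_Mapping.single (Poly_Mapping.single k (sylv k)) (1::complex)) (expo n j a)
     = (\<Sum>k\<le>n. if k = n \<and> j = replicate n 0 \<and> a = sylv n then 1 else 0)"
    unfolding lookup_sum lookup_single when_def
    by (intro sum.cong refl) (simp add: single_eq_expo_iff[OF assms])
  have B: "lk (\<Sum>i\<in>Iset n. Poly_Mapping.single (mon n i) (t i)) (expo n j a)
     = (\<Sum>i\<in>Iset n. if i = j @ [a] then t i else 0)"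
    unfolding lookup_sum lookup_single when_def
    by (intro sum.cong refl) (simp add: mon_eq_expo[OF Iset_length lj])
  have C: "(\<Sum>k\<le>n. if k = n \<and> j = replicate n 0 \<and> a = sylv n then 1 else 0)
     = (if j = replicate n 0 \<and> a = sylv n then (1::complex) else 0)"
  proof (cases "j = replicate n 0 \<and> a = sylv n")
    case True then show ?thesis by (simp add: sum.delta')
  next
    case False
    then have "\<And>k. \<not> (k = n \<and> j = replicate n 0 \<and> a = sylv n)" by blast
    then show ?thesis using False by (simp only: if_False sum.neutral_const)
  qed
  show ?thesis unfolding ff_alt lookup_add A B C
    using fin by (simp add: sum.delta')
qed

lemma finite_Jset: "finite (Jset n)"
proof (rule finite_subset)
  show "Jset n \<subseteq> {i. set i \<subseteq> {..Max (sylv ` {..n})} \<and> length i = n}"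
  proof
    fix i assume i: "i \<in> Jset n"
    have "\<forall>x\<in>set i. x \<le> Max (sylv ` {..n})"
    proof
      fix x assume "x \<in> set i"
      then obtain k where k: "k < length i" "i ! k = x" by (auto simp: in_set_conv_nth)
      then have "k < n" using Jset_length[OF i] by simp
      then have "x \<le> sylv k" using i k unfolding Jset_def by auto
      also have "\<dots> \<le> Max (sylv ` {..n})" using \<open>k < n\<close> by (intro Max_ge) auto
      finally show "x \<le> Max (sylv ` {..n})" .
    qed
    then show "i \<in> {i. set i \<subseteq> {..Max (sylv ` {..n})} \<and> length i = n}"
      using Jset_length[OF i] by auto
  qed
qed (rule finite_lists_length_eq, simp)

lemma append_Iset_iff:
  assumes "length j = n"
  shows "j @ [a] \<in> Iset n \<longleftrightarrow> j \<in> Jset n \<and> a \<le> sylv n - 2 \<and> wt n (j @ [a]) > 0"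
  using assms unfolding Iset_def Jset_def
  by (auto simp: nth_append less_Suc_eq_le le_less)

lemma coeff_TT:
  assumes "j \<in> Jset n"
  shows "coeff (TT n t j) a =
    (if j @ [a] \<in> Iset n then t (j @ [a]) else 0) + (if j = replicate n 0 \<and> a = sylv n then 1 else 0)"
proof (cases "a \<le> sylv n")
  case True
  then show ?thesis unfolding TT_def
    by (simp add: nth_default_def lookup_ff_expo[OF assms] less_Suc_eq_le del: upt_Suc)
next
  case False
  then have "j @ [a] \<notin> Iset n" using append_Iset_iff[OF Jset_length[OF assms]] by auto
  then show ?thesis using False unfolding TT_def
    by (simp add: nth_default_def del: upt_Suc)
qed

abbreviation zs :: "nat \<Rightarrow> nat list" where "zs m \<equiv> replicate (Suc m) (0::nat)"

declare replicate_Suc[simp del]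

lemma Iset_m_iff: "j \<in> Iset m \<longleftrightarrow> j \<in> Jset (Suc m) \<and> wt m j > 0"
  unfolding Iset_def Jset_def by (auto simp: less_Suc_eq_le)

lemma zs_Iset: "zs m \<in> Iset m"
  unfolding Iset_m_iff Jset_def using wt_zeros[of m] dd_pos[of m]
  by (simp del: replicate_Suc)

lemma zs_Jset: "zs m \<in> Jset (Suc m)"
  using zs_Iset Iset_m_iff by blast

lemma Iset_Jset: "j \<in> Iset m \<Longrightarrow> j \<in> Jset (Suc m)"
  using Iset_m_iff by blast

lemma append_Iset_wt_pos:
  assumes "length j = Suc m" "j @ [a] \<in> Iset (Suc m)"
  shows "wt m j > 0"
proof -
  have "int (sylv (Suc m)) * wt m j - int a * int (dd m) > 0"
    using assms wt_append[of j m a] unfolding Iset_def by simp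
  moreover have "int a * int (dd m) \<ge> 0" by simp
  ultimately have "int (sylv (Suc m)) * wt m j > 0" by linarith
  then show ?thesis by (simp add: zero_less_mult_iff)
qed

lemma append_Iset_imp:
  assumes "length j = Suc m" "j @ [a] \<in> Iset (Suc m)"
  shows "j \<in> Iset m"
  using assms append_Iset_wt_pos[OF assms] append_Iset_iff[OF assms(1)] Iset_m_iff by blast

lemma wt_append_nat:
  assumes "length j = Suc m" "wt m j > 0" "a \<le> nat (wt m j)"
  shows "nat (wt (Suc m) (j @ [a])) = nat (wt m j) + dd m * (nat (wt m j) - a)"
proof -
  obtain w where w: "wt m j = int w" using assms(2) by (metis pos_int_cases less_imp_le)
  have "wt (Suc m) (j @ [a]) = (int (dd m) + 1) * int w - int a * int (dd m)"
    using wt_append[OF assms(1)] w by (simp add: sylv_Suc_dd)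
  also have "\<dots> = int (w + dd m * (w - a))"
  proof -
    have "int (w + dd m * (w - a)) = int w + int (dd m) * (int w - int a)"
      using assms(3) w by (simp add: of_nat_diff)
    then show ?thesis by (simp add: algebra_simps)
  qed
  finally have X: "wt (Suc m) (j @ [a]) = int (w + dd m * (w - a))" .
  show ?thesis unfolding X w nat_int ..
qed

lemma append_Iset_nonzero_iff:
  assumes "j \<in> Iset m" "j \<noteq> zs m"
  shows "j @ [a] \<in> Iset (Suc m) \<longleftrightarrow> a \<le> nat (wt m j)"
proof
  have lj: "length j = Suc m" using assms Iset_length by blast
  assume "j @ [a] \<in> Iset (Suc m)"
  then show "a \<le> nat (wt m j)" using append_Iset_le[OF lj] by fastforce
next
  have lj: "length j = Suc m" using assms Iset_length by blast
  have wpos: "wt m j > 0" using assms Iset_m_iff by blast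
  have wle: "wt m j \<le> int (dd m) - 1" using wt_nonzero[OF lj assms(2)] .
  assume a: "a \<le> nat (wt m j)"
  have "a \<le> sylv (Suc m) - 2" using a wle by (simp add: sylv_Suc_dd)
  moreover have "nat (wt (Suc m) (j @ [a])) > 0"
    using wt_append_nat[OF lj wpos a] wpos by simp
  then have "wt (Suc m) (j @ [a]) > 0" by simp
  ultimately show "j @ [a] \<in> Iset (Suc m)"
    using append_Iset_iff[OF lj] Iset_Jset[OF assms(1)] by blast
qed

lemma zs_append_Iset_iff:
  "zs m @ [a] \<in> Iset (Suc m) \<longleftrightarrow> a \<le> sylv (Suc m) - 2"
proof -
  have lj: "length (zs m) = Suc m" by simp
  have "wt (Suc m) (zs m @ [a]) = int (sylv (Suc m)) * int (dd m) - int a * int (dd m)"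
    using wt_append[OF lj] wt_zeros by simp
  then have "a \<le> sylv (Suc m) - 2 \<Longrightarrow> wt (Suc m) (zs m @ [a]) > 0"
    using dd_pos[of m] sylv_ge2[of "Suc m"]
    by (simp add: left_diff_distrib[symmetric])
  then show ?thesis using append_Iset_iff[OF lj] zs_Jset[of m] by blast
qed

lemma zs_append_wt:
  assumes "a \<le> sylv (Suc m)"
  shows "nat (wt (Suc m) (zs m @ [a])) = dd m * (sylv (Suc m) - a)"
proof -
  have lj: "length (zs m) = Suc m" by simp
  have "wt (Suc m) (zs m @ [a]) = int (sylv (Suc m)) * int (dd m) - int a * int (dd m)"
    using wt_append[OF lj] wt_zeros by simp
  also have "\<dots> = int (dd m * (sylv (Suc m) - a))"
    using assms by (simp add: of_nat_diff algebra_simps)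
  finally show ?thesis by (metis nat_int)
qed

lemma TT_zero:
  assumes "j \<in> Jset (Suc m)" "j \<notin> Iset m"
  shows "TT (Suc m) t j = 0"
proof -
  have lj: "length j = Suc m" using assms Jset_length by blast
  have "j \<noteq> zs m" using assms zs_Iset by metis
  moreover have "\<And>a. j @ [a] \<notin> Iset (Suc m)" using append_Iset_imp[OF lj] assms by blast
  ultimately show ?thesis
    by (intro poly_eqI) (simp add: coeff_TT[OF assms(1)])
qed

lemma TT_ne0_Iset:
  assumes "j \<in> Jset (Suc m)" "TT (Suc m) t j \<noteq> 0"
  shows "j \<in> Iset m"
  using TT_zero assms by blast

lemma TT_coeff_big:
  assumes "j \<in> Iset m" "j \<noteq> zs m" "a > nat (wt m j)"
  shows "coeff (TT (Suc m) t j) a = 0"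
  using assms append_Iset_nonzero_iff[OF assms(1,2)] coeff_TT[OF Iset_Jset[OF assms(1)]]
  by simp

lemma TT_degree:
  assumes "j \<in> Iset m" "j \<noteq> zs m"
  shows "degree (TT (Suc m) t j) \<le> nat (wt m j)"
  using TT_coeff_big[OF assms] by (intro degree_le) auto

lemma TT0_coeff:
  "coeff (TT (Suc m) t (zs m)) a =
     (if a \<le> sylv (Suc m) - 2 then t (zs m @ [a]) else 0) + (if a = sylv (Suc m) then 1 else 0)"
  using coeff_TT[OF zs_Jset, of m t a] zs_append_Iset_iff[of m a] by simp

lemma TT0_top: "coeff (TT (Suc m) t (zs m)) (sylv (Suc m)) = 1"
  using TT0_coeff[of m t "sylv (Suc m)"] sylv_ge2[of "Suc m"] by simp

lemma TT0_ne0: "TT (Suc m) t (zs m) \<noteq> 0"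
  using TT0_top[of m t] by (metis coeff_0 zero_neq_one)

lemma TT0_sub: "coeff (TT (Suc m) t (zs m)) (dd m) = 0"
  using TT0_coeff[of m t "dd m"] dd_pos[of m] by (simp add: sylv_Suc_dd)

lemma TT0_degree: "degree (TT (Suc m) t (zs m)) = sylv (Suc m)"
proof (rule antisym)
  show "degree (TT (Suc m) t (zs m)) \<le> sylv (Suc m)"
    by (intro degree_le) (auto simp: TT0_coeff)
  show "sylv (Suc m) \<le> degree (TT (Suc m) t (zs m))"
    using TT0_top by (intro le_degree) simp
qed

lemma coeff_L_power:
  "coeff ([:-c, 1:] ^ w) a = (if a \<le> w then of_nat (w choose a) * (-c) ^ (w - a) else 0)"
proof (cases "a \<le> w")
  case True
  then show ?thesis by (simp add: coeff_linear_poly_power)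
next
  case False
  then show ?thesis by (simp add: coeff_eq_0 degree_linear_power)
qed

lemma H1:
  fixes p :: "complex poly"
  assumes "p \<noteq> 0" "[:-c, 1:] ^ w dvd p" "degree p \<le> w"
  shows "p = smult (coeff p w) ([:-c, 1:] ^ w)"
proof -
  obtain q where q: "p = [:-c, 1:] ^ w * q" using assms(2) by (elim dvdE)
  have "q \<noteq> 0" using q assms(1) by auto
  then have "degree p = w + degree q" using q by (simp add: degree_mult_eq degree_linear_power)
  then have "degree q = 0" using assms(3) by simp
  then have "q = [:coeff q 0:]" using degree_0_id by metis
  then have p2: "p = smult (coeff q 0) ([:-c, 1:] ^ w)" using q
    by (metis mult.commute smult_pCons smult_0_right mult_1 pCons_0_0 one_pCons smult_one
        mult_smult_left)
  have c1: "coeff ([:-c, 1:] ^ w) w = 1" by (rule coeff_linear_power)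
  have "coeff p w = coeff q 0" using p2 c1 by (metis coeff_smult mult.right_neutral)
  then show ?thesis using p2 by metis
qed

lemma H2:
  fixes p :: "complex poly"
  assumes "degree p = Suc d" "coeff p (Suc d) = 1" "coeff p d = 0" "[:-c, 1:] ^ d dvd p" "d \<ge> 1"
  shows "p = [:-c, 1:] ^ Suc d + smult (of_nat (Suc d) * c) ([:-c, 1:] ^ d)"
proof -
  obtain q where q: "p = [:-c, 1:] ^ d * q" using assms(4) by (elim dvdE)
  have p0: "p \<noteq> 0" using assms(2) by auto
  have "q \<noteq> 0" using q p0 by auto
  then have "degree p = d + degree q" using q by (simp add: degree_mult_eq degree_linear_power)
  then have dq: "degree q = 1" using assms(1) by simp
  have qe: "q = [:coeff q 0, coeff q 1:]"
    by (rule poly_eqI) (auto simp: coeff_pCons split: nat.split intro!: coeff_eq_0 simp: dq)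
  have "lead_coeff p = lead_coeff ([:-c, 1:] ^ d) * lead_coeff q" using q lead_coeff_mult by blast
  then have q1: "coeff q 1 = 1" using assms(1,2) dq by (simp add: lead_coeff_power)
  define q0 where "q0 = coeff q 0"
  have pq: "p = [:-c, 1:] ^ d * [:q0, 1:]" using q qe q1 q0_def by simp
  have "coeff p d = q0 * coeff ([:-c, 1:] ^ d) d + coeff ([:-c, 1:] ^ d) (d - 1)"
    unfolding pq using assms(5) by (simp add: coeff_pCons split: nat.split)
  also have "\<dots> = q0 - of_nat d * c"
    using assms(5) binomial_symmetric[of "d - 1" d] by (simp add: coeff_L_power coeff_linear_power)
  finally have "q0 = of_nat d * c" using assms(3) by simp
  then have "[:q0, 1:] = [:-c, 1:] + [:of_nat (Suc d) * c:]" by (simp add: algebra_simps)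
  then have "p = [:-c, 1:] ^ d * [:-c, 1:] + [:-c, 1:] ^ d * [:of_nat (Suc d) * c:]"
    unfolding pq by (simp only: distrib_left)
  moreover have "\<And>x. [:-c, 1:] ^ d * [:x:] = smult x ([:-c, 1:] ^ d)" by (simp add: mult.commute)
  ultimately show ?thesis by (simp only: power_Suc2)
qed

lemma valbar_le1_iff:
  assumes "wt m j > 0"
  shows "valbar (Suc m) t c j \<le> 1 \<longleftrightarrow> order c (TT (Suc m) t j) \<le> nat (wt m j)"
proof -
  have "real_of_int (wt m j) > 0" using assms by simp
  then show ?thesis unfolding valbar_def using assms
    by (simp add: divide_le_eq_1) linarith
qed

lemma valbar_ge1_iff:
  assumes "wt m j > 0"
  shows "valbar (Suc m) t c j \<ge> 1 \<longleftrightarrow> order c (TT (Suc m) t j) \<ge> nat (wt m j)"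
proof -
  have "real_of_int (wt m j) > 0" using assms by simp
  then show ?thesis unfolding valbar_def using assms
    by (simp add: le_divide_eq_1) linarith
qed

definition VS where "VS n t c = {valbar n t c j | j. j \<in> Jset n \<and> TT n t j \<noteq> 0}"

lemma VS_finite: "finite (VS n t c)"
proof -
  have "VS n t c = (\<lambda>j. valbar n t c j) ` {j \<in> Jset n. TT n t j \<noteq> 0}" unfolding VS_def by auto
  then show ?thesis using finite_Jset by simp
qed

lemma VS_ne: "VS (Suc m) t c \<noteq> {}"
  unfolding VS_def using zs_Jset TT0_ne0 by blast

lemma minvalbar_VS: "minvalbar n t c = Min (VS n t c)"
  unfolding minvalbar_def VS_def ..

lemma minvalbar_le1:
  assumes "j \<in> Iset m" "TT (Suc m) t j \<noteq> 0" "order c (TT (Suc m) t j) \<le> nat (wt m j)"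
  shows "minvalbar (Suc m) t c \<le> 1"
proof -
  have "valbar (Suc m) t c j \<in> VS (Suc m) t c" unfolding VS_def using assms Iset_Jset by blast
  moreover have "valbar (Suc m) t c j \<le> 1" using assms valbar_le1_iff Iset_m_iff by blast
  ultimately show ?thesis unfolding minvalbar_VS using VS_finite by (meson Min_le order_trans)
qed

lemma minvalbar_ge1:
  assumes "\<And>j. j \<in> Jset (Suc m) \<Longrightarrow> TT (Suc m) t j \<noteq> 0 \<Longrightarrow> order c (TT (Suc m) t j) \<ge> nat (wt m j)"
  shows "minvalbar (Suc m) t c \<ge> 1"
  unfolding minvalbar_VS
proof (subst Min_ge_iff[OF VS_finite VS_ne], intro ballI)
  fix x assume "x \<in> VS (Suc m) t c"
  then obtain j where j: "x = valbar (Suc m) t c j" "j \<in> Jset (Suc m)" "TT (Suc m) t j \<noteq> 0"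
    unfolding VS_def by blast
  have "wt m j > 0" using TT_ne0_Iset[OF j(2,3)] Iset_m_iff by blast
  then show "1 \<le> x" using j assms valbar_ge1_iff by blast
qed

lemma minvalbar_eq1_imp:
  assumes "minvalbar (Suc m) t c = 1" "j \<in> Jset (Suc m)" "TT (Suc m) t j \<noteq> 0"
  shows "order c (TT (Suc m) t j) \<ge> nat (wt m j)"
proof -
  have "valbar (Suc m) t c j \<in> VS (Suc m) t c" unfolding VS_def using assms by blast
  then have "valbar (Suc m) t c j \<ge> 1" using assms(1) VS_finite unfolding minvalbar_VS
    by (metis Min_le)
  moreover have "wt m j > 0" using TT_ne0_Iset[OF assms(2,3)] Iset_m_iff by blast
  ultimately show ?thesis using valbar_ge1_iff by blast
qed

lemma butlast_append_last: "i \<noteq> [] \<Longrightarrow> i = butlast i @ [last i]" by simp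

theorem part1:
  assumes "nonzero_param (Suc m) t"
  shows "minvalbar (Suc m) t c \<le> 1"
proof (cases "\<exists>j\<in>Iset m. j \<noteq> zs m \<and> TT (Suc m) t j \<noteq> 0")
  case True
  then obtain j where j: "j \<in> Iset m" "j \<noteq> zs m" "TT (Suc m) t j \<noteq> 0" by blast
  have "order c (TT (Suc m) t j) \<le> degree (TT (Suc m) t j)" using order_degree j by blast
  also have "\<dots> \<le> nat (wt m j)" using TT_degree j by blast
  finally show ?thesis using minvalbar_le1 j by blast
next
  case False
  obtain i where i: "i \<in> Iset (Suc m)" "t i \<noteq> 0" using assms unfolding nonzero_param_def by blast
  have li: "length i = Suc (Suc m)" using Iset_length i by blast
  define j where "j = butlast i"
  define a where "a = last i"
  have ija: "i = j @ [a]" using li unfolding j_def a_def by (intro butlast_append_last) auto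
  have lj: "length j = Suc m" using li j_def by simp
  have jI: "j \<in> Iset m" using append_Iset_imp[OF lj] i ija by blast
  have "a \<le> sylv (Suc m) - 2" using append_Iset_iff[OF lj] i ija by blast
  then have "a \<noteq> sylv (Suc m)" using sylv_ge2[of "Suc m"] by linarith
  then have cj: "coeff (TT (Suc m) t j) a = t i"
    using coeff_TT[OF Iset_Jset[OF jI], of t a] i ija by simp
  then have "TT (Suc m) t j \<noteq> 0" using i by auto
  then have jz: "j = zs m" using False jI by blast
  have a_le: "a \<le> sylv (Suc m) - 2" using zs_append_Iset_iff i ija jz by blast
  let ?T = "TT (Suc m) t (zs m)"
  have "order c ?T \<le> dd m"
  proof (rule ccontr)
    assume "\<not> order c ?T \<le> dd m"
    then have "sylv (Suc m) \<le> order c ?T" by (simp add: sylv_Suc_dd)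
    then have dv: "[:-c, 1:] ^ sylv (Suc m) dvd ?T"
      using order_1 le_imp_power_dvd dvd_trans by blast
    have T: "?T = smult (coeff ?T (sylv (Suc m))) ([:-c, 1:] ^ sylv (Suc m))"
      using H1[OF TT0_ne0 dv] TT0_degree by simp
    then have T2: "?T = [:-c, 1:] ^ sylv (Suc m)" using TT0_top by simp
    have "coeff ?T (dd m) = 0" by (rule TT0_sub)
    then have "of_nat (sylv (Suc m) choose dd m) * (-c) ^ (sylv (Suc m) - dd m) = 0"
      using T2 coeff_L_power[of c "sylv (Suc m)" "dd m"] by (simp add: sylv_Suc_dd)
    moreover have "(1::complex) + of_nat (dd m) \<noteq> 0"
      using of_nat_neq_0[of "dd m", where ?'a=complex] by (simp add: add.commute)
    ultimately have c0: "c = 0" by (simp add: sylv_Suc_dd)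
    have "coeff ?T a = 0"
    proof -
      have "a < sylv (Suc m)" using a_le sylv_ge2[of "Suc m"] by linarith
      then show ?thesis using T2 coeff_L_power[of c "sylv (Suc m)" a] c0 by simp
    qed
    then show False using cj jz by (simp add: i)
  qed
  then show ?thesis using minvalbar_le1[OF zs_Iset TT0_ne0] wt_zeros by simp
qed

definition key :: "nat \<Rightarrow> nat list \<Rightarrow> nat \<Rightarrow> nat \<Rightarrow> (nat \<Rightarrow>\<^sub>0 nat)" where
  "key n j a b = expo n j a + Poly_Mapping.single (Suc n) b"

lemma lookup_key:
  "lk (key n j a b) v = (if v < n then j ! v else if v = n then a else if v = Suc n then b else 0)"
  unfolding key_def by (simp add: lookup_add lookup_expo lookup_single when_def)

lemma key_inj:
  assumes "length j = n" "length j' = n"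
  shows "key n j a b = key n j' a' b' \<longleftrightarrow> j = j' \<and> a = a' \<and> b = b'"
proof
  assume h: "key n j a b = key n j' a' b'"
  then have hv: "\<And>v. lk (key n j a b) v = lk (key n j' a' b') v" by simp
  have "\<And>v. v < n \<Longrightarrow> j ! v = j' ! v"
  proof -
    fix v assume "v < n" then show "j ! v = j' ! v" using hv[of v] by (simp add: lookup_key)
  qed
  then have "j = j'" using assms by (simp add: list_eq_iff_nth_eq)
  moreover have "a = a'" using hv[of n] by (simp add: lookup_key)
  moreover have "b = b'" using hv[of "Suc n"] by (simp add: lookup_key)
  ultimately show "j = j' \<and> a = a' \<and> b = b'" by simp
qed simp

definition BX :: "nat \<Rightarrow> (nat list \<times> nat \<times> nat) set" where
  "BX n = Jset n \<times> {..sylv n} \<times> {..dd n}"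

definition KK :: "nat \<Rightarrow> nat list \<times> nat \<times> nat \<Rightarrow> (nat \<Rightarrow>\<^sub>0 nat)" where
  "KK n x = key n (fst x) (fst (snd x)) (snd (snd x))"

definition GG :: "(nat list \<Rightarrow> nat \<Rightarrow> nat \<Rightarrow> complex) \<Rightarrow> nat list \<times> nat \<times> nat \<Rightarrow> complex" where
  "GG g x = g (fst x) (fst (snd x)) (snd (snd x))"

definition MP :: "nat \<Rightarrow> (nat list \<Rightarrow> nat \<Rightarrow> nat \<Rightarrow> complex) \<Rightarrow> mpoly" where
  "MP n g = (\<Sum>x\<in>BX n. Poly_Mapping.single (KK n x) (GG g x))"

lemma finite_BX: "finite (BX n)"
  unfolding BX_def using finite_Jset by simp

lemma KK_eq_iff: "x \<in> BX n \<Longrightarrow> y \<in> BX n \<Longrightarrow> KK n x = KK n y \<longleftrightarrow> x = y"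
  unfolding BX_def KK_def using key_inj Jset_length
  by (cases x, cases y) (auto simp: Jset_length key_inj)

lemma lookup_MP: 
  assumes "x \<in> BX n"
  shows "lk (MP n g) (KK n x) = GG g x"
proof -
  have "lk (MP n g) (KK n x) = (\<Sum>y\<in>BX n. if y = x then GG g y else 0)"
    unfolding MP_def lookup_sum lookup_single when_def
    by (intro sum.cong refl) (use assms KK_eq_iff in auto)
  also have "\<dots> = GG g x" using assms finite_BX by (simp add: sum.delta')
  finally show ?thesis .
qed

lemma MP_inj: "MP n g = MP n h \<Longrightarrow> x \<in> BX n \<Longrightarrow> GG g x = GG h x"
  using lookup_MP by metis

lemma MP_cong: "(\<And>x. x \<in> BX n \<Longrightarrow> GG g x = GG h x) \<Longrightarrow> MP n g = MP n h"
  unfolding MP_def by (intro sum.cong) auto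

lemma MP_add: "MP n g + MP n h = MP n (\<lambda>j a b. g j a b + h j a b)"
  unfolding MP_def GG_def by (simp add: sum.distrib[symmetric] single_add)

lemma MP_zero: "MP n (\<lambda>j a b. 0) = 0"
  unfolding MP_def GG_def by simp

lemma MP_sum:
  assumes "finite A"
  shows "(\<Sum>y\<in>A. MP n (f y)) = MP n (\<lambda>j a b. \<Sum>y\<in>A. f y j a b)"
  using assms
proof (induction A rule: finite_induct)
  case empty then show ?case using MP_zero by simp
next
  case (insert y A)
  then show ?case by (simp add: MP_add)
qed

lemma MP_atom:
  assumes "x \<in> BX n"
  shows "Poly_Mapping.single (KK n x) z = MP n (\<lambda>j a b. if (j, a, b) = x then z else 0)"
proof -
  have "MP n (\<lambda>j a b. if (j, a, b) = x then z else 0) = (\<Sum>y\<in>BX n. if y = x then Poly_Mapping.single (KK n y) z else 0)"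
    unfolding MP_def GG_def by (intro sum.cong refl) auto
  also have "\<dots> = Poly_Mapping.single (KK n x) z" using assms finite_BX by (simp add: sum.delta')
  finally show ?thesis by simp
qed

lemma KK_key: "KK n (j, a, b) = key n j a b" unfolding KK_def by simp

lemma GG_apply: "GG g (j, a, b) = g j a b" unfolding GG_def by simp

lemma single_power2:
  "(Poly_Mapping.single (Poly_Mapping.single v e) (z::complex)) ^ k
     = Poly_Mapping.single (Poly_Mapping.single v (e * k)) (z ^ k)"
  by (induction k) (simp_all add: mult_single single_add[symmetric] algebra_simps)

lemma Const_single: "Const z = Poly_Mapping.single 0 z" unfolding Const_def ..

lemma lin_power:
  "(Var n - Const c * Var (Suc n) ^ D) ^ w =
   (\<Sum>a\<le>w. Poly_Mapping.single (Poly_Mapping.single n a + Poly_Mapping.single (Suc n) (D * (w - a)))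
        (of_nat (w choose a) * (-c) ^ (w - a)))"
proof -
  have e1: "Var n - Const c * Var (Suc n) ^ D = Var n + Poly_Mapping.single (Poly_Mapping.single (Suc n) D) (-c)"
    by (simp add: Var_power Const_mult_single single_uminus)
  have "(Var n + Poly_Mapping.single (Poly_Mapping.single (Suc n) D) (-c)) ^ w
     = (\<Sum>a\<le>w. of_nat (w choose a) * Var n ^ a * (Poly_Mapping.single (Poly_Mapping.single (Suc n) D) (-c)) ^ (w - a))"
    by (rule binomial_ring)
  also have "\<dots> = (\<Sum>a\<le>w. Poly_Mapping.single (Poly_Mapping.single n a + Poly_Mapping.single (Suc n) (D * (w - a)))
        (of_nat (w choose a) * (-c) ^ (w - a)))"
  proof (intro sum.cong refl)
    fix a
    have "of_nat (w choose a) * Var n ^ a * (Poly_Mapping.single (Poly_Mapping.single (Suc n) D) (-c)) ^ (w - a)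
      = Poly_Mapping.single 0 (of_nat (w choose a)) * Poly_Mapping.single (Poly_Mapping.single n a) 1
        * Poly_Mapping.single (Poly_Mapping.single (Suc n) (D * (w - a))) ((-c) ^ (w - a))"
      by (simp only: single_of_nat[symmetric] Var_power single_power2)
    also have "\<dots> = Poly_Mapping.single (Poly_Mapping.single n a + Poly_Mapping.single (Suc n) (D * (w - a)))
        (of_nat (w choose a) * (-c) ^ (w - a))"
      by (simp add: mult_single del: single_of_nat)
    finally show "of_nat (w choose a) * Var n ^ a * (Poly_Mapping.single (Poly_Mapping.single (Suc n) D) (-c)) ^ (w - a)
      = Poly_Mapping.single (Poly_Mapping.single n a + Poly_Mapping.single (Suc n) (D * (w - a)))
        (of_nat (w choose a) * (-c) ^ (w - a))" .
  qed
  finally show ?thesis unfolding e1 .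
qed

lemma key_decomp:
  "(\<Sum>k<n. Poly_Mapping.single k (j ! k)) + (Poly_Mapping.single n a + Poly_Mapping.single (Suc n) x)
     + Poly_Mapping.single (Suc n) e = key n j a (e + x)"
  by (intro poly_mapping_eqI) (simp add: lookup_add lookup_sum_single lookup_key lookup_single when_def)

lemma term_expand:
  "Const z * (\<Prod>k<n. Var k ^ (j ! k)) * (Var n - Const c * Var (Suc n) ^ D) ^ w * Var (Suc n) ^ e
   = (\<Sum>a\<le>w. Poly_Mapping.single (key n j a (e + D * (w - a))) (z * of_nat (w choose a) * (-c) ^ (w - a)))"
proof -
  have P: "(\<Prod>k<n. Var k ^ (j ! k)) = Poly_Mapping.single (\<Sum>k<n. Poly_Mapping.single k (j ! k)) 1"
    by (simp add: Var_power prod_single_one)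
  show ?thesis
    unfolding P lin_power unfolding Var_power Const_single
    by (simp add: sum_distrib_left sum_distrib_right mult_single key_decomp mult.assoc)
qed

lemma sum_delta_cond:
  assumes "finite A"
  shows "(\<Sum>y\<in>A. if y = x \<and> P y then f y else (0::'a::comm_monoid_add)) = (if x \<in> A \<and> P x then f x else 0)"
proof -
  have "(\<Sum>y\<in>A. if y = x \<and> P y then f y else 0) = (\<Sum>y\<in>A. if y = x then (if P x then f x else 0) else 0)"
    by (intro sum.cong) auto
  also have "\<dots> = (if x \<in> A \<and> P x then f x else 0)" using assms by (simp add: sum.delta')
  finally show ?thesis .
qed

lemma finite_Iset: "finite (Iset n)"
proof (rule finite_subset)
  show "Iset n \<subseteq> {i. set i \<subseteq> {..Max (sylv ` {..n})} \<and> length i = Suc n}"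
  proof
    fix i assume i: "i \<in> Iset n"
    have "\<forall>x\<in>set i. x \<le> Max (sylv ` {..n})"
    proof
      fix x assume "x \<in> set i"
      then obtain k where k: "k < length i" "i ! k = x" by (auto simp: in_set_conv_nth)
      then have "k \<le> n" using Iset_length[OF i] by simp
      then have "x \<le> sylv k" using i k unfolding Iset_def by auto
      also have "\<dots> \<le> Max (sylv ` {..n})" using \<open>k \<le> n\<close> by (intro Max_ge) auto
      finally show "x \<le> Max (sylv ` {..n})" .
    qed
    then show "i \<in> {i. set i \<subseteq> {..Max (sylv ` {..n})} \<and> length i = Suc n}"
      using Iset_length[OF i] by auto
  qed
qed (rule finite_lists_length_eq, simp)

definition gF :: "nat \<Rightarrow> (nat list \<Rightarrow> complex) \<Rightarrow> nat list \<Rightarrow> nat \<Rightarrow> nat \<Rightarrow> complex" where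
  "gF n u j a b = (if j = replicate n 0 \<and> a = sylv n \<and> b = 0 then 1 else 0)
     + (if j @ [a] \<in> Iset n \<and> b = nat (wt n (j @ [a])) then u (j @ [a]) else 0)"

lemma zeros_Jset: "replicate n 0 \<in> Jset n"
  unfolding Jset_def by simp

lemma Iset_BX:
  assumes "i \<in> Iset n"
  shows "(butlast i, last i, nat (wt n i)) \<in> BX n" "i = butlast i @ [last i]"
proof -
  have li: "length i = Suc n" using Iset_length assms by blast
  show ie: "i = butlast i @ [last i]" using li by (intro butlast_append_last) auto
  have lb: "length (butlast i) = n" using li by simp
  have "butlast i \<in> Jset n \<and> last i \<le> sylv n - 2" using append_Iset_iff[OF lb, of "last i"] assms ie by simp
  moreover have "nat (wt n i) \<le> dd n" using wt_le_dd[of n i] by simp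
  ultimately show "(butlast i, last i, nat (wt n i)) \<in> BX n" unfolding BX_def by auto
qed

lemma FF_term:
  assumes "i \<in> Iset n"
  shows "Const (u i) * (\<Prod>k\<le>n. Var k ^ (i ! k)) * Var (Suc n) ^ nat (wt n i)
     = MP n (\<lambda>j a b. if (j, a, b) = (butlast i, last i, nat (wt n i)) then u i else 0)"
proof -
  have "(\<Prod>k\<le>n. Var k ^ (i ! k)) = Poly_Mapping.single (mon n i) 1"
    unfolding mon_def by (simp add: Var_power prod_single_one)
  moreover have "mon n i = expo n (butlast i) (last i)"
    using mon_eq_expo[of i n "butlast i" "last i"] Iset_length[OF assms] Iset_BX(2)[OF assms] by simp
  ultimately have "Const (u i) * (\<Prod>k\<le>n. Var k ^ (i ! k)) * Var (Suc n) ^ nat (wt n i)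
     = Poly_Mapping.single (KK n (butlast i, last i, nat (wt n i))) (u i)"
    by (simp add: Var_power Const_single mult_single KK_key key_def)
  also have "\<dots> = MP n (\<lambda>j a b. if (j, a, b) = (butlast i, last i, nat (wt n i)) then u i else 0)"
    by (rule MP_atom[OF Iset_BX(1)[OF assms]])
  finally show ?thesis .
qed

lemma key_zeros: "key n (replicate n 0) a 0 = Poly_Mapping.single n a"
  by (intro poly_mapping_eqI) (simp add: lookup_key lookup_single when_def)

lemma FF_MP: "FF n u = (\<Sum>k<n. Var k ^ sylv k) + MP n (gF n u)"
proof -
  have x0: "(replicate n 0, sylv n, 0) \<in> BX n" unfolding BX_def using zeros_Jset by simp
  have A: "(\<Sum>k\<le>n. Var k ^ sylv k) = (\<Sum>k<n. Var k ^ sylv k)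
       + MP n (\<lambda>j a b. if (j, a, b) = (replicate n 0, sylv n, 0) then 1 else 0)"
  proof -
    have "Var n ^ sylv n = Poly_Mapping.single (KK n (replicate n 0, sylv n, 0)) 1"
      by (simp add: Var_power KK_key key_zeros)
    then show ?thesis using MP_atom[OF x0, of 1] by (simp add: lessThan_Suc_atMost[symmetric])
  qed
  have B: "(\<Sum>i\<in>Iset n. Const (u i) * (\<Prod>k\<le>n. Var k ^ (i ! k)) * Var (Suc n) ^ nat (wt n i))
     = MP n (\<lambda>j a b. \<Sum>i\<in>Iset n. if (j, a, b) = (butlast i, last i, nat (wt n i)) then u i else 0)"
    by (simp add: FF_term MP_sum finite_Iset)
  have C: "MP n (\<lambda>j a b. if (j, a, b) = (replicate n 0, sylv n, 0) then 1 else 0)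
     + MP n (\<lambda>j a b. \<Sum>i\<in>Iset n. if (j, a, b) = (butlast i, last i, nat (wt n i)) then u i else 0)
     = MP n (gF n u)"
    unfolding MP_add
  proof (rule MP_cong)
    fix x assume x: "x \<in> BX n"
    obtain j a b where xe: "x = (j, a, b)" by (cases x) auto
    have lj: "length j = n" using x xe unfolding BX_def by (auto simp: Jset_length)
    have "(\<Sum>i\<in>Iset n. if (j, a, b) = (butlast i, last i, nat (wt n i)) then u i else 0)
        = (\<Sum>i\<in>Iset n. if i = j @ [a] \<and> b = nat (wt n i) then u i else 0)"
    proof (intro sum.cong refl)
      fix i assume i: "i \<in> Iset n"
      have "(j, a, b) = (butlast i, last i, nat (wt n i)) \<longleftrightarrow> i = j @ [a] \<and> b = nat (wt n i)"
        using Iset_BX(2)[OF i] by (metis butlast_snoc last_snoc prod.inject)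
      then show "(if (j, a, b) = (butlast i, last i, nat (wt n i)) then u i else 0)
          = (if i = j @ [a] \<and> b = nat (wt n i) then u i else 0)" by simp
    qed
    also have "\<dots> = (if j @ [a] \<in> Iset n \<and> b = nat (wt n (j @ [a])) then u (j @ [a]) else 0)"
      by (rule sum_delta_cond[OF finite_Iset])
    finally show "GG (\<lambda>j a b. (if (j, a, b) = (replicate n 0, sylv n, 0) then 1 else 0) +
             (\<Sum>i\<in>Iset n. if (j, a, b) = (butlast i, last i, nat (wt n i)) then u i else 0)) x =
          GG (gF n u) x"
      unfolding xe GG_apply gF_def by simp
  qed
  show ?thesis unfolding FF_def A B C[symmetric] by (simp add: add.assoc)
qed

definition gL :: "nat \<Rightarrow> (nat list \<Rightarrow> complex) \<Rightarrow> complex \<Rightarrow> nat list \<Rightarrow> nat \<Rightarrow> nat \<Rightarrow> complex" where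
  "gL m t' c j a b =
     (if j \<in> Iset m \<and> a \<le> nat (wt m j) \<and> b = nat (wt m j) + dd m * (nat (wt m j) - a)
      then t' j * of_nat (nat (wt m j) choose a) * (-c) ^ (nat (wt m j) - a) else 0)
   + (if j = zs m \<and> a \<le> sylv (Suc m) \<and> b = dd m * (sylv (Suc m) - a)
      then of_nat (sylv (Suc m) choose a) * (-c) ^ (sylv (Suc m) - a) else 0)"

lemma inner_sum:
  fixes W :: nat
  shows "(\<Sum>a'\<le>W. if (j, a, b) = (j', a', e + D * (W - a')) then f a' else (0::complex))
     = (if j = j' \<and> a \<le> W \<and> b = e + D * (W - a) then f a else 0)"
proof -
  have "(\<Sum>a'\<le>W. if (j, a, b) = (j', a', e + D * (W - a')) then f a' else (0::complex))
      = (\<Sum>a'\<in>{..W}. if a' = a \<and> (j = j' \<and> b = e + D * (W - a')) then f a' else 0)"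
    by (intro sum.cong) auto
  also have "\<dots> = (if a \<in> {..W} \<and> (j = j' \<and> b = e + D * (W - a)) then f a else 0)"
    by (rule sum_delta_cond) simp
  finally show ?thesis by auto
qed

lemma D_bound:
  assumes "w \<le> dd m"
  shows "w + dd m * (w - a) \<le> dd (Suc m)"
proof -
  have "w + dd m * (w - a) \<le> dd m + dd m * dd m"
    using assms by (intro add_mono mult_le_mono) auto
  also have "\<dots> = dd (Suc m)" by (simp add: dd_Suc sylv_Suc_dd algebra_simps)
  finally show ?thesis .
qed

lemma LHS_MP:
  fixes m :: nat and t' :: "nat list \<Rightarrow> complex" and c :: complex
  defines "lin \<equiv> Var (Suc m) - Const c * Var (Suc (Suc m)) ^ dd m"
  shows "(\<Sum>k<Suc m. Var k ^ sylv k)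
      + (\<Sum>j\<in>Iset m. Const (t' j) * (\<Prod>k<Suc m. Var k ^ (j ! k)) * lin ^ nat (wt m j)
            * Var (Suc (Suc m)) ^ nat (wt m j))
      + lin ^ sylv (Suc m)
    = (\<Sum>k<Suc m. Var k ^ sylv k) + MP (Suc m) (gL m t' c)"
proof -
  let ?D = "dd m"
  let ?s = "sylv (Suc m)"
  have TJ: "Const (t' j) * (\<Prod>k<Suc m. Var k ^ (j ! k)) * lin ^ nat (wt m j) * Var (Suc (Suc m)) ^ nat (wt m j)
     = MP (Suc m) (\<lambda>j' a b. \<Sum>a'\<le>nat (wt m j). if (j', a, b) = (j, a', nat (wt m j) + ?D * (nat (wt m j) - a'))
            then t' j * of_nat (nat (wt m j) choose a') * (-c) ^ (nat (wt m j) - a') else 0)"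
    if j: "j \<in> Iset m" for j
  proof -
    let ?w = "nat (wt m j)"
    have wle: "?w \<le> ?D" using wt_le_dd[of m j] by simp
    have pts: "(j, a', ?w + ?D * (?w - a')) \<in> BX (Suc m)" if "a' \<le> ?w" for a'
    proof -
      have "a' \<le> ?s" using that wle by (simp add: sylv_Suc_dd)
      then show ?thesis unfolding BX_def using Iset_Jset[OF j] D_bound[OF wle, of a'] by simp
    qed
    have "Const (t' j) * (\<Prod>k<Suc m. Var k ^ (j ! k)) * lin ^ ?w * Var (Suc (Suc m)) ^ ?w
        = (\<Sum>a'\<le>?w. Poly_Mapping.single (key (Suc m) j a' (?w + ?D * (?w - a')))
             (t' j * of_nat (?w choose a') * (-c) ^ (?w - a')))"
      unfolding lin_def by (rule term_expand)
    also have "\<dots> = (\<Sum>a'\<le>?w. MP (Suc m) (\<lambda>j'' a b. if (j'', a, b) = (j, a', ?w + ?D * (?w - a'))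
             then t' j * of_nat (?w choose a') * (-c) ^ (?w - a') else 0))"
      by (intro sum.cong refl) (metis KK_key MP_atom pts atMost_iff)
    also have "\<dots> = MP (Suc m) (\<lambda>j' a b. \<Sum>a'\<le>?w. if (j', a, b) = (j, a', ?w + ?D * (?w - a'))
            then t' j * of_nat (?w choose a') * (-c) ^ (?w - a') else 0)"
      by (rule MP_sum) simp
    finally show ?thesis .
  qed
  have TL: "lin ^ ?s = MP (Suc m) (\<lambda>j' a b. \<Sum>a'\<le>?s. if (j', a, b) = (zs m, a', 0 + ?D * (?s - a'))
            then 1 * of_nat (?s choose a') * (-c) ^ (?s - a') else 0)"
  proof -
    have pts: "(zs m, a', 0 + ?D * (?s - a')) \<in> BX (Suc m)" if "a' \<le> ?s" for a'
    proof -
      have "?D * (?s - a') \<le> ?D * ?s" by simp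
      then show ?thesis unfolding BX_def using zs_Jset[of m] that by (simp add: dd_Suc)
    qed
    have P1: "(\<Prod>k<Suc m. Var k ^ (zs m ! k)) = 1" by (simp del: replicate_Suc)
    have "lin ^ ?s = Const 1 * (\<Prod>k<Suc m. Var k ^ (zs m ! k)) * lin ^ ?s * Var (Suc (Suc m)) ^ 0"
      unfolding P1 by (simp add: Const_single)
    also have "\<dots> = (\<Sum>a'\<le>?s. Poly_Mapping.single (key (Suc m) (zs m) a' (0 + ?D * (?s - a')))
             (1 * of_nat (?s choose a') * (-c) ^ (?s - a')))"
      unfolding lin_def by (rule term_expand)
    also have "\<dots> = (\<Sum>a'\<le>?s. MP (Suc m) (\<lambda>j'' a b. if (j'', a, b) = (zs m, a', 0 + ?D * (?s - a'))
             then 1 * of_nat (?s choose a') * (-c) ^ (?s - a') else 0))"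
      by (intro sum.cong refl) (metis KK_key MP_atom pts atMost_iff)
    also have "\<dots> = MP (Suc m) (\<lambda>j' a b. \<Sum>a'\<le>?s. if (j', a, b) = (zs m, a', 0 + ?D * (?s - a'))
            then 1 * of_nat (?s choose a') * (-c) ^ (?s - a') else 0)"
      by (rule MP_sum) simp
    finally show ?thesis .
  qed
  have S: "(\<Sum>j\<in>Iset m. Const (t' j) * (\<Prod>k<Suc m. Var k ^ (j ! k)) * lin ^ nat (wt m j)
            * Var (Suc (Suc m)) ^ nat (wt m j)) + lin ^ ?s = MP (Suc m) (gL m t' c)"
    unfolding TL
    apply (simp only: TJ cong: sum.cong)
    unfolding MP_sum[OF finite_Iset] MP_add
  proof (rule MP_cong)
    fix x assume x: "x \<in> BX (Suc m)"
    obtain j a b where xe: "x = (j, a, b)" by (cases x) auto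
    have A: "(\<Sum>j'\<in>Iset m. \<Sum>a'\<le>nat (wt m j'). if (j, a, b) = (j', a', nat (wt m j') + ?D * (nat (wt m j') - a'))
            then t' j' * of_nat (nat (wt m j') choose a') * (-c) ^ (nat (wt m j') - a') else 0)
       = (if j \<in> Iset m \<and> a \<le> nat (wt m j) \<and> b = nat (wt m j) + dd m * (nat (wt m j) - a)
      then t' j * of_nat (nat (wt m j) choose a) * (-c) ^ (nat (wt m j) - a) else 0)"
    proof -
      have "(\<Sum>j'\<in>Iset m. \<Sum>a'\<le>nat (wt m j'). if (j, a, b) = (j', a', nat (wt m j') + ?D * (nat (wt m j') - a'))
            then t' j' * of_nat (nat (wt m j') choose a') * (-c) ^ (nat (wt m j') - a') else 0)
          = (\<Sum>j'\<in>Iset m. if j' = j \<and> (a \<le> nat (wt m j') \<and> b = nat (wt m j') + ?D * (nat (wt m j') - a))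
             then t' j' * of_nat (nat (wt m j') choose a) * (-c) ^ (nat (wt m j') - a) else 0)"
        by (intro sum.cong refl, subst inner_sum) auto
      also have "\<dots> = (if j \<in> Iset m \<and> (a \<le> nat (wt m j) \<and> b = nat (wt m j) + ?D * (nat (wt m j) - a))
             then t' j * of_nat (nat (wt m j) choose a) * (-c) ^ (nat (wt m j) - a) else 0)"
        by (rule sum_delta_cond[OF finite_Iset])
      finally show ?thesis by simp
    qed
    have B: "(\<Sum>a'\<le>?s. if (j, a, b) = (zs m, a', 0 + ?D * (?s - a'))
            then 1 * of_nat (?s choose a') * (-c) ^ (?s - a') else 0)
        = (if j = zs m \<and> a \<le> ?s \<and> b = ?D * (?s - a) then of_nat (?s choose a) * (-c) ^ (?s - a) else 0)"
      by (subst inner_sum) simp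
    show "GG (\<lambda>j a b. (\<Sum>j'\<in>Iset m. \<Sum>a'\<le>nat (wt m j'). if (j, a, b) = (j', a', nat (wt m j') + ?D * (nat (wt m j') - a'))
            then t' j' * of_nat (nat (wt m j') choose a') * (-c) ^ (nat (wt m j') - a') else 0)
          + (\<Sum>a'\<le>?s. if (j, a, b) = (zs m, a', 0 + ?D * (?s - a'))
            then 1 * of_nat (?s choose a') * (-c) ^ (?s - a') else 0)) x = GG (gL m t' c) x"
      unfolding xe GG_apply A B gL_def ..
  qed
  show ?thesis using S by (simp add: add.assoc)
qed

lemma bdry_iff:
  "bdry_identity (Suc m) t' u \<longleftrightarrow>
   (\<forall>x\<in>BX (Suc m). GG (gL m t' (t' (zs m) / of_nat (sylv (Suc m)))) x = GG (gF (Suc m) u) x)"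
proof -
  let ?c = "t' (zs m) / of_nat (sylv (Suc m))"
  have "bdry_identity (Suc m) t' u \<longleftrightarrow>
     (\<Sum>k<Suc m. Var k ^ sylv k) + MP (Suc m) (gL m t' ?c)
       = (\<Sum>k<Suc m. Var k ^ sylv k) + MP (Suc m) (gF (Suc m) u)"
    unfolding bdry_identity_def Let_def diff_Suc_1 FF_MP[of "Suc m" u] LHS_MP ..
  also have "\<dots> \<longleftrightarrow> MP (Suc m) (gL m t' ?c) = MP (Suc m) (gF (Suc m) u)"
    by (rule add_left_cancel)
  also have "\<dots> \<longleftrightarrow> (\<forall>x\<in>BX (Suc m). GG (gL m t' ?c) x = GG (gF (Suc m) u) x)"
  proof
    assume "MP (Suc m) (gL m t' ?c) = MP (Suc m) (gF (Suc m) u)"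
    then show "\<forall>x\<in>BX (Suc m). GG (gL m t' ?c) x = GG (gF (Suc m) u) x" using MP_inj by blast
  next
    assume "\<forall>x\<in>BX (Suc m). GG (gL m t' ?c) x = GG (gF (Suc m) u) x"
    then show "MP (Suc m) (gL m t' ?c) = MP (Suc m) (gF (Suc m) u)" by (intro MP_cong) blast
  qed
  finally show ?thesis .
qed

lemma coeff_T0form:
  "coeff ([:-c, 1:] ^ sylv (Suc m) + smult (of_nat (sylv (Suc m)) * c) ([:-c, 1:] ^ dd m)) a =
     (if a \<le> sylv (Suc m) then of_nat (sylv (Suc m) choose a) * (-c) ^ (sylv (Suc m) - a) else 0)
   + (if a \<le> dd m then of_nat (sylv (Suc m)) * c * (of_nat (dd m choose a) * (-c) ^ (dd m - a)) else 0)"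
  by (simp add: coeff_L_power)

lemma dd_arith: "a \<le> dd m \<Longrightarrow> dd m + dd m * (dd m - a) = dd m * (sylv (Suc m) - a)"
  by (simp add: sylv_Suc_dd algebra_simps Suc_diff_le)

lemma gF_zs:
  assumes "a \<le> sylv (Suc m)"
  shows "gF (Suc m) u (zs m) a b =
    (if b = dd m * (sylv (Suc m) - a) then coeff (TT (Suc m) u (zs m)) a else 0)"
proof -
  have w: "a \<le> sylv (Suc m) - 2 \<Longrightarrow> nat (wt (Suc m) (zs m @ [a])) = dd m * (sylv (Suc m) - a)"
    using zs_append_wt assms by blast
  have s2: "sylv (Suc m) \<ge> 2" by (rule sylv_ge2)
  show ?thesis unfolding gF_def TT0_coeff zs_append_Iset_iff
    using w s2 assms by (auto simp: diff_le_self)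
qed

lemma gL_zs:
  assumes "a \<le> sylv (Suc m)"
  shows "gL m t' c (zs m) a b =
    (if b = dd m * (sylv (Suc m) - a) then
       (if a \<le> dd m then t' (zs m) * (of_nat (dd m choose a) * (-c) ^ (dd m - a)) else 0)
       + of_nat (sylv (Suc m) choose a) * (-c) ^ (sylv (Suc m) - a) else 0)"
proof -
  have w0: "nat (wt m (zs m)) = dd m" using wt_zeros by simp
  show ?thesis unfolding gL_def w0 using zs_Iset[of m] assms dd_arith[of a m]
    by (auto simp: mult.assoc)
qed

lemma gF_nz:
  assumes "j \<in> Iset m" "j \<noteq> zs m"
  shows "gF (Suc m) u j a b =
    (if a \<le> nat (wt m j) \<and> b = nat (wt m j) + dd m * (nat (wt m j) - a) then coeff (TT (Suc m) u j) a else 0)"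
proof -
  have lj: "length j = Suc m" using assms Iset_length by blast
  have wpos: "wt m j > 0" using assms Iset_m_iff by blast
  show ?thesis unfolding gF_def coeff_TT[OF Iset_Jset[OF assms(1)]] append_Iset_nonzero_iff[OF assms]
    using assms wt_append_nat[OF lj wpos, of a] by auto
qed

lemma gL_nz:
  assumes "j \<in> Iset m" "j \<noteq> zs m"
  shows "gL m t' c j a b =
    (if a \<le> nat (wt m j) \<and> b = nat (wt m j) + dd m * (nat (wt m j) - a)
     then t' j * of_nat (nat (wt m j) choose a) * (-c) ^ (nat (wt m j) - a) else 0)"
  unfolding gL_def using assms by auto

lemma gF_out:
  assumes "j \<in> Jset (Suc m)" "j \<notin> Iset m"
  shows "gF (Suc m) u j a b = 0"
proof -
  have lj: "length j = Suc m" using assms Jset_length by blast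
  have "j \<noteq> zs m" using assms zs_Iset by metis
  moreover have "j @ [a] \<notin> Iset (Suc m)" using append_Iset_imp[OF lj] assms by blast
  ultimately show ?thesis unfolding gF_def by simp
qed

lemma gL_out:
  assumes "j \<notin> Iset m"
  shows "gL m t' c j a b = 0"
proof -
  have "j \<noteq> zs m" using assms zs_Iset by metis
  then show ?thesis unfolding gL_def using assms by simp
qed

lemma BX_mem: "(j, a, b) \<in> BX n \<Longrightarrow> j \<in> Jset n \<and> a \<le> sylv n \<and> b \<le> dd n"
  unfolding BX_def by simp

lemma s_ne0: "(of_nat (sylv k) :: complex) \<noteq> 0"
  using sylv_pos[of k] by simp

theorem fwd:
  assumes nz: "nonzero_param (Suc m) t" and mv: "minvalbar (Suc m) t c = 1"
  shows "in_boundary (Suc m) t"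
proof -
  let ?s = "sylv (Suc m)"
  let ?d = "dd m"
  let ?T = "TT (Suc m) t"
  have ord: "[:-c, 1:] ^ nat (wt m j) dvd ?T j" if "j \<in> Jset (Suc m)" "?T j \<noteq> 0" for j
    using minvalbar_eq1_imp[OF mv that] order_1 le_imp_power_dvd dvd_trans by metis
  have Tj: "?T j = smult (coeff (?T j) (nat (wt m j))) ([:-c, 1:] ^ nat (wt m j))"
    if j: "j \<in> Iset m" "j \<noteq> zs m" for j
  proof (cases "?T j = 0")
    case True then show ?thesis by simp
  next
    case False
    show ?thesis by (rule H1[OF False ord[OF Iset_Jset[OF j(1)] False] TT_degree[OF j]])
  qed
  have T0: "?T (zs m) = [:-c, 1:] ^ ?s + smult (of_nat ?s * c) ([:-c, 1:] ^ ?d)"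
  proof -
    have sd: "?s = Suc ?d" by (simp add: sylv_Suc_dd)
    have dv: "[:-c, 1:] ^ ?d dvd ?T (zs m)"
      using ord[OF zs_Jset TT0_ne0] wt_zeros[of m] by simp
    have "?d \<ge> 1" using dd_pos[of m] by simp
    then show ?thesis using H2[of "?T (zs m)" ?d c] TT0_degree[of m t] TT0_top[of m t] TT0_sub[of m t] dv sd
      by simp
  qed
  define t' where "t' j = (if j \<in> Iset m then (if j = zs m then of_nat ?s * c
      else coeff (?T j) (nat (wt m j))) else 0)" for j
  have t'0: "t' (zs m) = of_nat ?s * c" unfolding t'_def using zs_Iset by simp
  have c_eq: "t' (zs m) / of_nat ?s = c" using t'0 s_ne0 by simp
  have t'j: "t' j = coeff (?T j) (nat (wt m j))" if "j \<in> Iset m" "j \<noteq> zs m" for j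
    unfolding t'_def using that by simp
  have np: "nonzero_param m t'"
  proof -
    have "param m t'" unfolding param_def t'_def by simp
    moreover have "\<exists>j\<in>Iset m. t' j \<noteq> 0"
    proof (rule ccontr)
      assume "\<not> (\<exists>j\<in>Iset m. t' j \<noteq> 0)"
      then have all0: "\<And>j. j \<in> Iset m \<Longrightarrow> t' j = 0" by blast
      have c0: "c = 0" using all0[OF zs_Iset] t'0 sylv_pos[of "Suc m"] by simp
      have "t i = 0" if i: "i \<in> Iset (Suc m)" for i
      proof -
        have li: "length i = Suc (Suc m)" using Iset_length i by blast
        define j where "j = butlast i"
        define a where "a = last i"
        have ija: "i = j @ [a]" using li unfolding j_def a_def by (intro butlast_append_last) auto
        have lj: "length j = Suc m" using li j_def by simp
        have jI: "j \<in> Iset m" using append_Iset_imp[OF lj] i ija by blast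
        have "a \<le> ?s - 2" using append_Iset_iff[OF lj] i ija by blast
        then have as: "a < ?s" using sylv_ge2[of "Suc m"] by linarith
        then have cj: "coeff (?T j) a = t i"
          using coeff_TT[OF Iset_Jset[OF jI], of t a] i ija by simp
        show ?thesis
        proof (cases "j = zs m")
          case True
          then have "coeff (?T j) a = coeff ([:-c, 1:] ^ ?s) a" using T0 c0 by simp
          also have "\<dots> = 0" unfolding coeff_L_power using c0 as by simp
          finally show ?thesis using cj by simp
        next
          case False
          then show ?thesis using Tj[OF jI False] all0[OF jI] t'j[OF jI False] cj by simp
        qed
      qed
      then show False using nz unfolding nonzero_param_def by blast
    qed
    ultimately show ?thesis unfolding nonzero_param_def by blast
  qed
  have bd: "bdry_identity (Suc m) t' t"
    unfolding bdry_iff c_eq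
  proof
    fix x assume x: "x \<in> BX (Suc m)"
    obtain j a b where xe: "x = (j, a, b)" by (cases x) auto
    have jJ: "j \<in> Jset (Suc m)" and as: "a \<le> ?s" using BX_mem x xe by auto
    show "GG (gL m t' c) x = GG (gF (Suc m) t) x"
      unfolding xe GG_apply
    proof (cases "j \<in> Iset m")
      case False
      then show "gL m t' c j a b = gF (Suc m) t j a b" using gL_out gF_out jJ by metis
    next
      case jI: True
      show "gL m t' c j a b = gF (Suc m) t j a b"
      proof (cases "j = zs m")
        case True
        have "coeff (?T (zs m)) a = (if a \<le> ?d then t' (zs m) * (of_nat (?d choose a) * (-c) ^ (?d - a)) else 0)
           + of_nat (?s choose a) * (-c) ^ (?s - a)"
          unfolding T0 coeff_T0form t'0 using as by simp
        then show ?thesis unfolding True gL_zs[OF as] gF_zs[OF as] by simp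
      next
        case False
        have ca: "coeff (?T j) a = t' j * coeff ([:-c, 1:] ^ nat (wt m j)) a"
          using arg_cong[OF Tj[OF jI False], of "\<lambda>p. coeff p a"] t'j[OF jI False] by simp
        show ?thesis unfolding gL_nz[OF jI False] gF_nz[OF jI False] ca
          by (simp add: coeff_L_power mult.assoc)
      qed
    qed
  qed
  have "scale (Suc m) 1 t = t" unfolding scale_def by simp
  moreover have "param (Suc m) t" using nz unfolding nonzero_param_def by blast
  ultimately show ?thesis unfolding in_boundary_def using np bd
    by (metis diff_Suc_1 one_neq_zero)
qed

lemma scale_coeff:
  assumes "j \<in> Jset (Suc m)"
  shows "coeff (TT (Suc m) (scale (Suc m) a0 u) j) a
     = a0 ^ nat (wt (Suc m) (j @ [a])) * coeff (TT (Suc m) u j) a"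
proof -
  have lj: "length j = Suc m" using assms Jset_length by blast
  consider (I) "j @ [a] \<in> Iset (Suc m)" | (S) "j = zs m" "a = sylv (Suc m)"
    | (O) "j @ [a] \<notin> Iset (Suc m)" "\<not> (j = zs m \<and> a = sylv (Suc m))" by blast
  then show ?thesis
  proof cases
    case I
    then have "a \<le> sylv (Suc m) - 2" using append_Iset_iff[OF lj] by blast
    then have "a \<noteq> sylv (Suc m)" using sylv_ge2[of "Suc m"] by linarith
    then show ?thesis unfolding coeff_TT[OF assms] using I by (simp add: scale_def)
  next
    case S
    then have "j @ [a] \<notin> Iset (Suc m)" using zs_append_Iset_iff[of m a] sylv_ge2[of "Suc m"] by simp
    moreover have "nat (wt (Suc m) (j @ [a])) = 0" using zs_append_wt[of "sylv (Suc m)" m] S by simp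
    ultimately show ?thesis unfolding coeff_TT[OF assms] using S by simp
  next
    case O
    then show ?thesis unfolding coeff_TT[OF assms] by auto
  qed
qed

lemma neg_pow_scale: "(-(x ^ d * c)) ^ k = x ^ (d * k) * (-c) ^ k" for x c :: complex
proof -
  have "-(x ^ d * c) = x ^ d * (-c)" by simp
  then show ?thesis by (simp only: power_mult_distrib power_mult)
qed

theorem bwd:
  assumes nz: "nonzero_param (Suc m) t" and ib: "in_boundary (Suc m) t"
  shows "\<exists>c. minvalbar (Suc m) t c = 1"
proof -
  let ?s = "sylv (Suc m)"
  let ?d = "dd m"
  obtain t' u a0 where np: "nonzero_param m t'" and pu: "param (Suc m) u"
    and bd: "bdry_identity (Suc m) t' u" and a0: "a0 \<noteq> 0" and te: "t = scale (Suc m) a0 u"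
    using ib unfolding in_boundary_def by auto
  define c where "c = t' (zs m) / of_nat ?s"
  have t'0: "t' (zs m) = of_nat ?s * c" unfolding c_def using s_ne0 by simp
  have eq: "\<And>x. x \<in> BX (Suc m) \<Longrightarrow> GG (gL m t' c) x = GG (gF (Suc m) u) x"
    using bd unfolding bdry_iff c_def by blast
  have U0: "TT (Suc m) u (zs m) = [:-c, 1:] ^ ?s + smult (of_nat ?s * c) ([:-c, 1:] ^ ?d)"
  proof (rule poly_eqI)
    fix a
    show "coeff (TT (Suc m) u (zs m)) a = coeff ([:-c, 1:] ^ ?s + smult (of_nat ?s * c) ([:-c, 1:] ^ ?d)) a"
    proof (cases "a \<le> ?s")
      case as: True
      have "?d * (?s - a) \<le> dd (Suc m)" by (simp add: dd_Suc)
      then have pt: "(zs m, a, ?d * (?s - a)) \<in> BX (Suc m)" unfolding BX_def using zs_Jset as by simp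
      have "gL m t' c (zs m) a (?d * (?s - a)) = gF (Suc m) u (zs m) a (?d * (?s - a))"
        using eq[OF pt] by (simp add: GG_apply)
      then show ?thesis unfolding gL_zs[OF as] gF_zs[OF as] coeff_T0form t'0 using as
        by (simp add: add.commute)
    next
      case False
      then have "a > ?d" by (simp add: sylv_Suc_dd)
      then show ?thesis unfolding coeff_T0form TT0_coeff using False by simp
    qed
  qed
  have Uj: "TT (Suc m) u j = smult (t' j) ([:-c, 1:] ^ nat (wt m j))"
    if jI: "j \<in> Iset m" and jz: "j \<noteq> zs m" for j
  proof (rule poly_eqI)
    fix a
    let ?w = "nat (wt m j)"
    show "coeff (TT (Suc m) u j) a = coeff (smult (t' j) ([:-c, 1:] ^ ?w)) a"
    proof (cases "a \<le> ?w")
      case aw: True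
      have wle: "?w \<le> ?d" using wt_le_dd[of m j] by simp
      have "a \<le> ?s" using aw wle by (simp add: sylv_Suc_dd)
      then have pt: "(j, a, ?w + ?d * (?w - a)) \<in> BX (Suc m)"
        unfolding BX_def using Iset_Jset[OF jI] D_bound[OF wle, of a] by simp
      have "gL m t' c j a (?w + ?d * (?w - a)) = gF (Suc m) u j a (?w + ?d * (?w - a))"
        using eq[OF pt] by (simp add: GG_apply)
      then show ?thesis unfolding gL_nz[OF jI jz] gF_nz[OF jI jz] using aw
        by (simp add: coeff_L_power mult.assoc)
    next
      case False
      then show ?thesis using TT_coeff_big[OF jI jz, of a u] by (simp add: coeff_L_power)
    qed
  qed
  define C where "C = a0 ^ ?d * c"
  have T0: "TT (Suc m) t (zs m) = [:-C, 1:] ^ ?s + smult (of_nat ?s * C) ([:-C, 1:] ^ ?d)"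
  proof (rule poly_eqI)
    fix a
    have sc: "coeff (TT (Suc m) t (zs m)) a = a0 ^ nat (wt (Suc m) (zs m @ [a])) * coeff (TT (Suc m) u (zs m)) a"
      unfolding te by (rule scale_coeff[OF zs_Jset])
    show "coeff (TT (Suc m) t (zs m)) a = coeff ([:-C, 1:] ^ ?s + smult (of_nat ?s * C) ([:-C, 1:] ^ ?d)) a"
    proof (cases "a \<le> ?s")
      case as: True
      have w: "nat (wt (Suc m) (zs m @ [a])) = ?d * (?s - a)" using zs_append_wt[OF as] .
      show ?thesis
      proof (cases "a \<le> ?d")
        case True
        have e: "?d * (?s - a) = ?d + ?d * (?d - a)" using dd_arith[OF True] by simp
        show ?thesis unfolding sc U0 coeff_T0form w e power_add C_def neg_pow_scale using as True
          by (simp add: power_mult algebra_simps)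
      next
        case False
        show ?thesis unfolding sc U0 coeff_T0form w C_def neg_pow_scale using as False
          by (simp add: power_mult algebra_simps)
      qed
    next
      case False
      then have "a > ?d" by (simp add: sylv_Suc_dd)
      then show ?thesis unfolding sc U0 coeff_T0form using False by simp
    qed
  qed
  have Tj: "TT (Suc m) t j = smult (t' j * a0 ^ nat (wt m j)) ([:-C, 1:] ^ nat (wt m j))"
    if jI: "j \<in> Iset m" and jz: "j \<noteq> zs m" for j
  proof (rule poly_eqI)
    fix a
    let ?w = "nat (wt m j)"
    have lj: "length j = Suc m" using jI Iset_length by blast
    have wpos: "wt m j > 0" using jI Iset_m_iff by blast
    have sc: "coeff (TT (Suc m) t j) a = a0 ^ nat (wt (Suc m) (j @ [a])) * coeff (TT (Suc m) u j) a"
      unfolding te by (rule scale_coeff[OF Iset_Jset[OF jI]])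
    show "coeff (TT (Suc m) t j) a = coeff (smult (t' j * a0 ^ ?w) ([:-C, 1:] ^ ?w)) a"
    proof (cases "a \<le> ?w")
      case True
      have w: "nat (wt (Suc m) (j @ [a])) = ?w + ?d * (?w - a)" using wt_append_nat[OF lj wpos True] .
      show ?thesis unfolding sc Uj[OF jI jz] coeff_smult coeff_L_power w power_add C_def neg_pow_scale
        using True by (simp add: power_mult algebra_simps)
    next
      case False
      then show ?thesis unfolding sc Uj[OF jI jz] by (simp add: coeff_L_power)
    qed
  qed
  have ordge: "order C (TT (Suc m) t j) \<ge> nat (wt m j)"
    if jJ: "j \<in> Jset (Suc m)" and ne: "TT (Suc m) t j \<noteq> 0" for j
  proof -
    have jI: "j \<in> Iset m" using TT_ne0_Iset[OF jJ ne] .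
    show ?thesis
    proof (cases "j = zs m")
      case True
      have f: "TT (Suc m) t j = [:-C, 1:] ^ ?d * ([:-C, 1:] + [:of_nat ?s * C:])"
        unfolding True T0 by (simp add: sylv_Suc_dd algebra_simps smult_add_left)
      have "order C (TT (Suc m) t j) = order C ([:-C, 1:] ^ ?d) + order C ([:-C, 1:] + [:of_nat ?s * C:])"
        using ne unfolding f by (rule order_mult)
      then show ?thesis using True wt_zeros[of m] by (simp add: order_power_n_n)
    next
      case False
      have "t' j * a0 ^ nat (wt m j) \<noteq> 0" using ne Tj[OF jI False] by auto
      then show ?thesis unfolding Tj[OF jI False] by (simp add: order_smult order_power_n_n)
    qed
  qed
  have "minvalbar (Suc m) t C \<ge> 1" using ordge by (rule minvalbar_ge1)
  moreover have "minvalbar (Suc m) t C \<le> 1" using part1[OF nz] .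
  ultimately show ?thesis by (intro exI[of _ C]) simp
qed

theorem lemma4p5:
  fixes n :: nat and t :: "nat list \<Rightarrow> complex"
  assumes "n \<ge> 1"
    and "nonzero_param n t"
  shows "(\<forall>c. minvalbar n t c \<le> 1) \<and> ((\<exists>c. minvalbar n t c = 1) \<longleftrightarrow> in_boundary n t)"
proof -
  obtain m where n: "n = Suc m" using assms(1) by (cases n) auto
  have nz: "nonzero_param (Suc m) t" using assms(2) n by simp
  show ?thesis unfolding n using part1[OF nz] fwd[OF nz] bwd[OF nz] by blast
qed

end
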